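(* Let $\mu$ be an absolutely continuous probability measure on $\mathbb{R}^d$ with density $f_\mu$ satisfying (B1), (B2) and (B3) below. Then there is a constant $C>0$ (independent of $\mathbf g,\mathbf g'$ and $i$) such that for all $\mathbf g,\mathbf g'\in\mathbb{R}^M$ and all $i\in\{1,\dots,M\}$, $$\mu\big(\mathbb L_i(\mathbf g)\setminus\mathbb L_i(\mathbf g')\big)\le C\,M\,\|\mathbf g-\mathbf g'\|_\infty .$$
   Context: $\nu=\sum_{i=1}^Mw_i\delta_{y_i}$ with distinct $y_i\in\mathbb{R}^d$, $w_i>0$, $\sum w_i=1$, $w_{\min}=\min w_i$. (PW): a probability measure $\rho$ satisfies it if $\exists C_{pw}$ with $\|f-\mathbb{E}_\rho f\|_{L^1(\rho)}\le C_{pw}\|\nabla f\|_{L^1(\rho)}$ for all $f\in C^1(\mathbb{R}^d)$. (B1): the cost is $c(x,y)=\frac12\|x-y\|^2$ and $\mu$ has finite second moment. (B2): there is a compact $K'$ with $\mu(K')\ge1-\frac14w_{\min}$ such that the probability measure with density $f_\mu\mathbf 1_{K'}/\mu(K')$ satisfies (PW). (B3): with $f_\mu^{R+0}=f_\mu\mathbf 1_{\{\|x\|\le R\}}$, $f_\mu^{R+r}=f_\mu\mathbf 1_{\{R+r-2\le\|x\|\le R+r\}}$ for $r\ge1$, $C_{f_\mu}^{R+r}=\sup f_\mu^{R+r}$, $\omega_{f_\mu}^{R+r}$ the modulus of continuity of $f_\mu^{R+r}$: there exist $R>1$, $C>0$, a modulus $\omega$ with $\sum_{r\ge0}(R+r)^{d-1}\omega_{f_\mu}^{R+r}(\delta)\le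 C\omega(\delta)$ $\forall\delta>0$ and $\sum_{r\ge0}(R+r)^{d-1}C_{f_\mu}^{R+r}<\infty$. $\mathbf g^c(x)=\min_i\{c(x,y_i)-g_i\}$; Laguerre cells $\mathbb L_j(\mathbf g)=\{x:\mathbf g^c(x)=c(x,y_j)-g_j\}$. *)

theory Defs
  imports "HOL-Probability.Probability"
begin

definition quad_cost :: "'a::euclidean_space \<Rightarrow> 'a \<Rightarrow> real" where
  "quad_cost x y = (norm (x - y))^2 / 2"

definition c_transform :: "nat \<Rightarrow> (nat \<Rightarrow> 'a::euclidean_space) \<Rightarrow> (nat \<Rightarrow> real) \<Rightarrow> 'a \<Rightarrow> real" where
  "c_transform M y g x = Min ((\<lambda>i. quad_cost x (y i) - g i) ` {..<M})"

definition laguerre_cell :: "nat \<Rightarrow> (nat \<Rightarrow> 'a::euclidean_space) \<Rightarrow> (nat \<Rightarrow> real) \<Rightarrow> nat \<Rightarrow> 'a set" where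
  "laguerre_cell M y g j = {x. c_transform M y g x = quad_cost x (y j) - g j}"

definition sup_norm :: "nat \<Rightarrow> (nat \<Rightarrow> real) \<Rightarrow> real" where
  "sup_norm M g = Max ((\<lambda>i. \<bar>g i\<bar>) ` {..<M})"

definition satisfies_PW :: "'a::euclidean_space measure \<Rightarrow> bool" where
  "satisfies_PW \<rho> \<longleftrightarrow> (\<exists>Cpw::real. \<forall>(f::'a \<Rightarrow> real) (G::'a \<Rightarrow> 'a).
      (\<forall>x. (f has_derivative (\<lambda>h. G x \<bullet> h)) (at x)) \<and> continuous_on UNIV G \<longrightarrow>
      (\<integral>\<^sup>+ x. ennreal \<bar>f x - (\<integral> z. f z \<partial>\<rho>)\<bar> \<partial>\<rho>)
        \<le> ennreal Cpw * (\<integral>\<^sup>+ x. ennreal (norm (G x)) \<partial>\<rho>))"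

definition mod_cont :: "('a::metric_space \<Rightarrow> real) \<Rightarrow> real \<Rightarrow> ennreal" where
  "mod_cont h \<delta> = (SUP p \<in> {p. dist (fst p) (snd p) \<le> \<delta>}. ennreal \<bar>h (fst p) - h (snd p)\<bar>)"

definition is_modulus :: "(real \<Rightarrow> real) \<Rightarrow> bool" where
  "is_modulus \<omega> \<longleftrightarrow> (\<forall>\<delta>\<ge>0. \<omega> \<delta> \<ge> 0) \<and> mono_on {0..} \<omega> \<and> \<omega> 0 = 0 \<and> (\<omega> \<longlongrightarrow> 0) (at_right 0)"

definition dens_slice :: "('a::euclidean_space \<Rightarrow> real) \<Rightarrow> real \<Rightarrow> nat \<Rightarrow> 'a \<Rightarrow> real" where
  "dens_slice f R r x =
     (if r = 0 then f x * indicator {x. norm x \<le> R} x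
      else f x * indicator {x. R + real r - 2 \<le> norm x \<and> norm x \<le> R + real r} x)"

definition condB3 :: "('a::euclidean_space \<Rightarrow> real) \<Rightarrow> bool" where
  "condB3 f \<longleftrightarrow> (\<exists>R C \<omega>. R > 1 \<and> C > 0 \<and> is_modulus \<omega> \<and>
     (\<forall>\<delta>>0. (\<Sum>r. ennreal ((R + real r) ^ (DIM('a) - 1)) * mod_cont (dens_slice f R r) \<delta>)
              \<le> ennreal (C * \<omega> \<delta>)) \<and>
     (\<Sum>r. ennreal ((R + real r) ^ (DIM('a) - 1)) * (SUP x. ennreal (dens_slice f R r x))) < \<infinity>)"

end

theory Submission
  imports Defs
begin

lemma interval_bound:
  fixes c a b wk :: real
  assumes wk: "wk \<noteq> 0" and ab: "a \<le> b"
  shows "emeasure lborel {y::real. a \<le> c + y*wk \<and> c + y*wk \<le> b} \<le> ennreal ((b-a)/\<bar>wk\<bar>)"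
proof (cases "wk > 0")
  case True
  have "{y::real. a \<le> c + y*wk \<and> c + y*wk \<le> b} = {(a-c)/wk .. (b-c)/wk}"
    using True by (auto simp: field_simps)
  moreover have "(a-c)/wk \<le> (b-c)/wk" using True ab by (simp add: divide_right_mono)
  moreover have "(b-c)/wk - (a-c)/wk = (b-a)/\<bar>wk\<bar>" using True by (simp add: field_simps)
  ultimately show ?thesis by simp
next
  case False
  then have n: "wk < 0" using wk by simp
  have "{y::real. a \<le> c + y*wk \<and> c + y*wk \<le> b} = {(b-c)/wk .. (a-c)/wk}"
    using n by (auto simp: field_simps)
  moreover have "(b-c)/wk \<le> (a-c)/wk" using n ab by (simp add: divide_right_mono_neg)
  moreover have "(a-c)/wk - (b-c)/wk = (b-a)/\<bar>wk\<bar>" using n by (simp add: field_simps)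
  ultimately show ?thesis by simp
qed

lemma inner_sum_Basis:
  fixes g :: "'a::euclidean_space \<Rightarrow> real"
  assumes "b \<in> Basis"
  shows "(\<Sum>c\<in>Basis. g c *\<^sub>R c) \<bullet> b = g b"
  using assms by (simp add: inner_sum_left inner_Basis if_distrib sum.delta cong: if_cong)

lemma inner_sum_w:
  fixes g :: "'a::euclidean_space \<Rightarrow> real"
  shows "w \<bullet> (\<Sum>c\<in>Basis. g c *\<^sub>R c) = (\<Sum>c\<in>Basis. g c * (w \<bullet> c))"
  by (simp add: inner_sum_right)

lemma slab_box:
  fixes w :: "'a::euclidean_space" and k :: 'a
  assumes k: "k \<in> Basis" and wk: "w \<bullet> k \<noteq> 0" and rho: "\<rho> \<ge> 0" and ab: "a \<le> b"
  shows "emeasure lborel {x::'a. (\<forall>c\<in>Basis-{k}. \<bar>x\<bullet>c\<bar> \<le> \<rho>) \<and> a \<le> w\<bullet>x \<and> w\<bullet>x \<le> b}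
          \<le> ennreal ((2*\<rho>)^(DIM('a)-1) * ((b-a)/\<bar>w\<bullet>k\<bar>))"
proof -
  interpret P: product_sigma_finite "\<lambda>_::'a. (lborel::real measure)" by standard
  define F where "F = {x::'a. (\<forall>c\<in>Basis-{k}. \<bar>x\<bullet>c\<bar> \<le> \<rho>) \<and> a \<le> w\<bullet>x \<and> w\<bullet>x \<le> b}"
  define B' where "B' = Basis - {k::'a}"
  define \<phi> where "\<phi> = (\<lambda>f::'a\<Rightarrow>real. \<Sum>c\<in>Basis. f c *\<^sub>R c)"
  define L where "L = (b-a)/\<bar>w\<bullet>k\<bar>"
  have Fb[measurable]: "F \<in> sets borel" unfolding F_def by measurable
  have phim[measurable]: "\<phi> \<in> borel_measurable (PiM Basis (\<lambda>_. lborel))"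
    unfolding \<phi>_def by measurable
  have BB: "Basis = insert k B'" using k unfolding B'_def by auto
  have fB': "finite B'" "k \<notin> B'" unfolding B'_def by auto
  have "emeasure lborel F = (\<integral>\<^sup>+x. indicator F x \<partial>lborel)" by simp
  also have "\<dots> = (\<integral>\<^sup>+f. indicator F (\<phi> f) \<partial>PiM Basis (\<lambda>_. lborel))"
    unfolding \<phi>_def by (subst lborel_eq) (rule nn_integral_distr; measurable)
  also have "\<dots> = (\<integral>\<^sup>+x. (\<integral>\<^sup>+y. indicator F (\<phi> (x(k:=y))) \<partial>lborel) \<partial>PiM B' (\<lambda>_. lborel))"
    unfolding BB by (rule P.product_nn_integral_insert[OF fB']) (simp add: BB[symmetric])
  also have "\<dots> \<le> (\<integral>\<^sup>+x. indicator (PiE B' (\<lambda>_. {-\<rho>..\<rho>})) x * ennreal L \<partial>PiM B' (\<lambda>_. lborel))"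
  proof (rule nn_integral_mono)
    fix x assume x: "x \<in> space (PiM B' (\<lambda>_. lborel::real measure))"
    show "(\<integral>\<^sup>+y. indicator F (\<phi> (x(k:=y))) \<partial>lborel) \<le> indicator (PiE B' (\<lambda>_. {-\<rho>..\<rho>})) x * ennreal L"
    proof (cases "x \<in> PiE B' (\<lambda>_. {-\<rho>..\<rho>})")
      case False
      then obtain c where c: "c \<in> B'" "x c \<notin> {-\<rho>..\<rho>}"
        using x by (auto simp: space_PiM PiE_iff)
      have "\<And>y. indicator F (\<phi> (x(k:=y))) = (0::ennreal)"
      proof -
        fix y
        have "\<phi> (x(k:=y)) \<bullet> c = x c" unfolding \<phi>_def
          using c fB' by (subst inner_sum_Basis) (auto simp: B'_def)
        then show "indicator F (\<phi> (x(k:=y))) = (0::ennreal)"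
          using c by (force simp: F_def B'_def indicator_def)
      qed
      then show ?thesis by simp
    next
      case True
      define cc where "cc = (\<Sum>c\<in>B'. x c * (w \<bullet> c))"
      have eq: "w \<bullet> \<phi> (x(k:=y)) = cc + y * (w\<bullet>k)" for y
      proof -
        have "\<phi> (x(k:=y)) = y *\<^sub>R k + (\<Sum>c\<in>B'. x c *\<^sub>R c)"
          unfolding \<phi>_def BB using fB' by (simp add: sum.insert) (intro sum.cong; auto)
        then show ?thesis unfolding cc_def by (simp add: inner_add_right inner_sum_right mult.commute)
      qed
      have "(\<integral>\<^sup>+y. indicator F (\<phi> (x(k:=y))) \<partial>lborel) \<le> (\<integral>\<^sup>+y. indicator {y::real. a \<le> cc + y*(w\<bullet>k) \<and> cc + y*(w\<bullet>k) \<le> b} y \<partial>lborel)"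
        by (intro nn_integral_mono) (auto simp: F_def eq indicator_def)
      also have "\<dots> = emeasure lborel {y::real. a \<le> cc + y*(w\<bullet>k) \<and> cc + y*(w\<bullet>k) \<le> b}"
        by (intro nn_integral_indicator) measurable
      also have "\<dots> \<le> ennreal L" unfolding L_def by (rule interval_bound[OF wk ab])
      finally show ?thesis using True by simp
    qed
  qed
  also have "\<dots> = ennreal L * emeasure (PiM B' (\<lambda>_. lborel)) (PiE B' (\<lambda>_. {-\<rho>..\<rho>}))"
  proof -
    have S: "PiE B' (\<lambda>_. {-\<rho>..\<rho>}) \<in> sets (PiM B' (\<lambda>_. lborel::real measure))"
      using fB' by (intro sets_PiM_I_finite) auto
    show ?thesis
      by (subst nn_integral_multc) (use S in \<open>auto simp: mult.commute\<close>)
  qed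
  also have "\<dots> = ennreal L * (\<Prod>c\<in>B'. emeasure lborel {-\<rho>..\<rho>})"
    by (subst P.emeasure_PiM) (auto simp: fB')
  also have "\<dots> = ennreal L * ennreal ((2*\<rho>)^(DIM('a)-1))"
    using rho fB' by (simp add: B'_def card_Diff_singleton k ennreal_power power_mult_distrib)
  also have "\<dots> = ennreal ((2*\<rho>)^(DIM('a)-1) * L)"
    using rho ab by (simp add: ennreal_mult[symmetric] L_def mult.commute)
  finally show ?thesis unfolding F_def L_def .
qed


lemma dens_pointwise:
  fixes f :: "'a::euclidean_space \<Rightarrow> real"
  assumes R: "R > 1"
  shows "ennreal (f x) \<le> (\<Sum>r. (SUP z. ennreal (dens_slice f R r z)) * indicator {z. norm z \<le> R + real r} x)"
proof -
  obtain r where r: "norm x \<le> R + real r" "dens_slice f R r x = f x"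
  proof (cases "norm x \<le> R")
    case True
    then show ?thesis using that[of 0] by (simp add: dens_slice_def)
  next
    case False
    define r where "r = nat \<lceil>norm x - R\<rceil>"
    have r1: "real r \<ge> norm x - R" "real r < norm x - R + 1" "r \<noteq> 0"
      using False unfolding r_def by linarith+
    show ?thesis
      by (rule that[of r]) (use r1 in \<open>auto simp: dens_slice_def indicator_def\<close>)
  qed
  let ?F = "\<lambda>r. (SUP z. ennreal (dens_slice f R r z)) * indicator {z. norm z \<le> R + real r} x :: ennreal"
  have "ennreal (f x) \<le> ?F r"
    using r by (auto simp: indicator_def intro!: SUP_upper2[where i=x])
  also have "\<dots> = (\<Sum>i\<in>{r}. ?F i)" by (simp only: sum.insert_remove sum.empty finite.emptyI) simp
  also have "\<dots> \<le> (\<Sum>i. ?F i)" by (rule sum_le_suminf) auto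
  finally show ?thesis .
qed

lemma slab_density:
  fixes f :: "'a::euclidean_space \<Rightarrow> real" and w k :: 'a
  assumes f_meas: "f \<in> borel_measurable borel" and R: "R > 1"
    and k: "k \<in> Basis" and wk: "w \<bullet> k \<noteq> 0" and ab: "a \<le> b"
  shows "emeasure (density lborel f) {x. a \<le> w\<bullet>x \<and> w\<bullet>x \<le> b}
     \<le> ennreal (2^(DIM('a)-1) * ((b-a)/\<bar>w\<bullet>k\<bar>)) *
        (\<Sum>r. ennreal ((R + real r) ^ (DIM('a) - 1)) * (SUP z. ennreal (dens_slice f R r z)))"
proof -
  define E where "E = {x::'a. a \<le> w\<bullet>x \<and> w\<bullet>x \<le> b}"
  define S where "S = (\<lambda>r. (SUP z. ennreal (dens_slice f R r z)))"
  define L where "L = (b-a)/\<bar>w\<bullet>k\<bar>"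
  have L0: "L \<ge> 0" using ab unfolding L_def by simp
  have Eb[measurable]: "E \<in> sets borel" unfolding E_def by measurable
  have "emeasure (density lborel f) E = (\<integral>\<^sup>+x. ennreal (f x) * indicator E x \<partial>lborel)"
    using f_meas by (subst emeasure_density) auto
  also have "\<dots> \<le> (\<integral>\<^sup>+x. (\<Sum>r. S r * indicator (E \<inter> {z. norm z \<le> R + real r}) x) \<partial>lborel)"
  proof (rule nn_integral_mono)
    fix x
    show "ennreal (f x) * indicator E x \<le> (\<Sum>r. S r * indicator (E \<inter> {z. norm z \<le> R + real r}) x)"
    proof (cases "x \<in> E")
      case True
      then show ?thesis using dens_pointwise[OF R, of f x] by (simp add: S_def indicator_def)
    next
      case False
      then show ?thesis by simp
    qed
  qed
  also have "\<dots> = (\<Sum>r. S r * emeasure lborel (E \<inter> {z. norm z \<le> R + real r}))"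
    by (subst nn_integral_suminf) (auto intro!: suminf_cong nn_integral_cmult_indicator)
  also have "\<dots> \<le> (\<Sum>r. ennreal (2^(DIM('a)-1) * L) * (ennreal ((R + real r) ^ (DIM('a) - 1)) * S r))"
  proof (intro suminf_le allI)
    fix r
    have rho: "R + real r \<ge> 0" using R by simp
    have "E \<inter> {z. norm z \<le> R + real r} \<subseteq> {x::'a. (\<forall>c\<in>Basis-{k}. \<bar>x\<bullet>c\<bar> \<le> R + real r) \<and> a \<le> w\<bullet>x \<and> w\<bullet>x \<le> b}"
      unfolding E_def using Basis_le_norm by (smt (verit) DiffD1 Int_iff mem_Collect_eq subsetI)
    then have "emeasure lborel (E \<inter> {z. norm z \<le> R + real r}) \<le> ennreal ((2*(R + real r))^(DIM('a)-1) * L)"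
      unfolding L_def by (rule order_trans[OF emeasure_mono slab_box[OF k wk rho ab]]) measurable
    also have "\<dots> = ennreal (2^(DIM('a)-1) * L) * ennreal ((R + real r) ^ (DIM('a) - 1))"
    proof -
      have "(2*(R + real r))^(DIM('a)-1) * L = (2^(DIM('a)-1) * L) * (R + real r) ^ (DIM('a) - 1)"
        by (simp only: power_mult_distrib mult_ac)
      then show ?thesis using rho L0 by (simp only: ennreal_mult[symmetric]) (auto intro: ennreal_mult)
    qed
    finally show "S r * emeasure lborel (E \<inter> {z. norm z \<le> R + real r}) \<le> ennreal (2^(DIM('a)-1) * L) * (ennreal ((R + real r) ^ (DIM('a) - 1)) * S r)"
      by (simp add: mult_left_mono mult.commute mult.left_commute)
  qed auto
  also have "\<dots> = ennreal (2^(DIM('a)-1) * L) * (\<Sum>r. ennreal ((R + real r) ^ (DIM('a) - 1)) * S r)"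
    by simp
  finally show ?thesis unfolding E_def S_def L_def .
qed


lemma quad_diff:
  fixes x u v :: "'a::euclidean_space"
  shows "quad_cost x u - quad_cost x v = (v - u) \<bullet> x + ((norm u)^2 - (norm v)^2)/2"
  unfolding quad_cost_def
  apply (simp add: power2_norm_eq_inner inner_diff_left inner_diff_right inner_commute algebra_simps)
  apply (simp add: field_simps)
  done

theorem lemmaB13:
  fixes f :: "'a::euclidean_space \<Rightarrow> real"
    and M :: nat and y :: "nat \<Rightarrow> 'a" and w :: "nat \<Rightarrow> real"
  assumes nu_pts: "inj_on y {..<M}"
    and nu_w_pos: "\<forall>i<M. w i > 0"
    and nu_w_sum: "(\<Sum>i<M. w i) = 1"
    and f_meas: "f \<in> borel_measurable borel"
    and f_nonneg: "\<forall>x. f x \<ge> 0"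
    and f_prob: "(\<integral>\<^sup>+ x. ennreal (f x) \<partial>lborel) = 1"
    and B1: "(\<integral>\<^sup>+ x. ennreal ((norm x)^2) \<partial>density lborel f) < \<infinity>"
    and B2: "\<exists>K'. compact K' \<and>
               measure (density lborel f) K' \<ge> 1 - (Min (w ` {..<M})) / 4 \<and>
               satisfies_PW (density lborel (\<lambda>x. f x * indicator K' x / measure (density lborel f) K'))"
    and B3: "condB3 f"
  shows "\<exists>C>0. \<forall>g g' :: nat \<Rightarrow> real. \<forall>i<M.
           measure (density lborel f) (laguerre_cell M y g i - laguerre_cell M y g' i)
             \<le> C * real M * sup_norm M (\<lambda>j. g j - g' j)"
  proof -
  from B3 obtain R where R: "R > 1" and Tfin: "(\<Sum>r. ennreal ((R + real r) ^ (DIM('a) - 1)) * (SUP x. ennreal (dens_slice f R r x))) < \<infinity>"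
    unfolding condB3_def by blast
  define T where "T = enn2real (\<Sum>r. ennreal ((R + real r) ^ (DIM('a) - 1)) * (SUP x. ennreal (dens_slice f R r x)))"
  have T0: "T \<ge> 0" unfolding T_def by simp
  have Teq: "(\<Sum>r. ennreal ((R + real r) ^ (DIM('a) - 1)) * (SUP x. ennreal (dens_slice f R r x))) = ennreal T"
    unfolding T_def using Tfin by (simp add: ennreal_enn2real_if less_top)
  define kk where "kk i j = (SOME k. k \<in> Basis \<and> (y j - y i) \<bullet> k \<noteq> 0)" for i j
  define K where "K i j = (if y j = y i then 0 else 2^(DIM('a)-1) / \<bar>(y j - y i) \<bullet> kk i j\<bar> * T)" for i j
  have K0: "K i j \<ge> 0" for i j unfolding K_def using T0 by simp
  have Kslab: "measure (density lborel f) {x. a \<le> (y j - y i)\<bullet>x \<and> (y j - y i)\<bullet>x \<le> b} \<le> K i j * (b - a)"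
    if ab: "a \<le> b" and ne: "y j \<noteq> y i" for i j a b
  proof -
    have "\<exists>k. k \<in> Basis \<and> (y j - y i) \<bullet> k \<noteq> 0"
      using ne by (metis euclidean_all_zero_iff eq_iff_diff_eq_0)
    then have kk: "kk i j \<in> Basis" "(y j - y i) \<bullet> kk i j \<noteq> 0"
      unfolding kk_def by (metis (mono_tags, lifting) someI_ex)+
    have "emeasure (density lborel f) {x. a \<le> (y j - y i)\<bullet>x \<and> (y j - y i)\<bullet>x \<le> b}
       \<le> ennreal (2^(DIM('a)-1) * ((b-a)/\<bar>(y j - y i)\<bullet>kk i j\<bar>)) * ennreal T"
      using slab_density[OF f_meas R kk ab] unfolding Teq .
    also have "\<dots> = ennreal (K i j * (b - a))"
      using ne ab T0 unfolding K_def by (simp add: ennreal_mult[symmetric] field_simps)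
    finally show ?thesis unfolding measure_def
      using K0[of i j] ab by (intro enn2real_leI) auto
  qed
  have finM: "finite_measure (density lborel f)"
  proof
    have "emeasure (density lborel f) (space (density lborel f)) = (\<integral>\<^sup>+ x. ennreal (f x) \<partial>lborel)"
      using f_meas by (subst emeasure_density) auto
    then show "emeasure (density lborel f) (space (density lborel f)) \<noteq> \<infinity>" using f_prob by simp
  qed
  define Ktot where "Ktot = (\<Sum>i<M. \<Sum>j<M. K i j)"
  have Ktot0: "Ktot \<ge> 0" unfolding Ktot_def using K0 by (simp add: sum_nonneg)
  have Kle: "K i j \<le> Ktot" if "i < M" "j < M" for i j
  proof -
    have "K i j \<le> (\<Sum>j<M. K i j)" using that K0 by (intro member_le_sum) auto
    also have "\<dots> \<le> Ktot" unfolding Ktot_def using that K0 by (intro member_le_sum sum_nonneg) auto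
    finally show ?thesis .
  qed
  show ?thesis
  proof (intro exI[of _ "2 * Ktot + 1"] conjI allI impI)
    show "2 * Ktot + 1 > 0" using Ktot0 by simp
    fix g g' :: "nat \<Rightarrow> real" and i assume i: "i < M"
    define \<delta> where "\<delta> = sup_norm M (\<lambda>j. g j - g' j)"
    have dj: "\<bar>g j - g' j\<bar> \<le> \<delta>" if "j < M" for j
      unfolding \<delta>_def sup_norm_def using that by (intro Max_ge) auto
    have d0: "\<delta> \<ge> 0" using dj[OF i] by simp
    define cst where "cst j = ((norm (y i))^2 - (norm (y j))^2)/2" for j
    define S where "S j = (if j = i then {} else
        {x. g' i - g' j - cst j \<le> (y j - y i)\<bullet>x \<and> (y j - y i)\<bullet>x \<le> g i - g j - cst j})" for j
    have Sm: "S j \<in> sets (density lborel f)" for j unfolding S_def by auto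
    have sub: "laguerre_cell M y g i - laguerre_cell M y g' i \<subseteq> (\<Union>j<M. S j)"
    proof
      fix x assume x: "x \<in> laguerre_cell M y g i - laguerre_cell M y g' i"
      let ?A = "\<lambda>g. (\<lambda>j. quad_cost x (y j) - g j) ` {..<M}"
      have fin: "finite (?A h)" "?A h \<noteq> {}" for h using i by auto
      have x1: "Min (?A g) = quad_cost x (y i) - g i" and x2: "Min (?A g') \<noteq> quad_cost x (y i) - g' i"
        using x unfolding laguerre_cell_def c_transform_def by auto
      have le1: "quad_cost x (y i) - g i \<le> quad_cost x (y j) - g j" if "j < M" for j
        using Min_le[OF fin(1), of "quad_cost x (y j) - g j" g] that x1 by auto
      obtain j where j: "j < M" "Min (?A g') = quad_cost x (y j) - g' j"
        using Min_in[OF fin(1,2), of g'] by auto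
      have "Min (?A g') \<le> quad_cost x (y i) - g' i" using i by (intro Min_le) auto
      then have lt: "quad_cost x (y j) - g' j < quad_cost x (y i) - g' i" using j x2 by auto
      then have ji: "j \<noteq> i" by auto
      have qd: "quad_cost x (y i) - quad_cost x (y j) = (y j - y i)\<bullet>x + cst j"
        unfolding cst_def by (rule quad_diff)
      have "x \<in> S j" unfolding S_def using ji le1[OF j(1)] lt qd by auto
      then show "x \<in> (\<Union>j<M. S j)" using j by auto
    qed
    have mS: "measure (density lborel f) (S j) \<le> K i j * (2 * \<delta>)" if j: "j < M" for j
    proof (cases "j = i")
      case True then show ?thesis using K0 d0 by (simp add: S_def)
    next
      case False
      have ne: "y j \<noteq> y i" using nu_pts False i j by (auto dest: inj_onD)
      show ?thesis
      proof (cases "g' i - g' j - cst j \<le> g i - g j - cst j")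
        case True
        have "measure (density lborel f) (S j) \<le> K i j * ((g i - g j - cst j) - (g' i - g' j - cst j))"
          using Kslab[OF True ne] False by (simp add: S_def)
        also have "\<dots> \<le> K i j * (2 * \<delta>)"
          using dj[OF i] dj[OF j] K0[of i j] by (intro mult_left_mono) auto
        finally show ?thesis .
      next
        case nle: False
        have "S j = {}" using nle False unfolding S_def by auto
        then show ?thesis using K0 d0 by simp
      qed
    qed
    have "measure (density lborel f) (laguerre_cell M y g i - laguerre_cell M y g' i)
        \<le> measure (density lborel f) (\<Union>j<M. S j)"
      using sub Sm by (intro finite_measure.finite_measure_mono[OF finM]) auto
    also have "\<dots> \<le> (\<Sum>j<M. measure (density lborel f) (S j))"
      using Sm by (intro measure_UNION_le) auto
    also have "\<dots> \<le> (\<Sum>j<M. K i j * (2 * \<delta>))" by (intro sum_mono mS) auto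
    also have "\<dots> = (\<Sum>j<M. K i j) * (2 * \<delta>)" by (simp add: sum_distrib_right)
    also have "\<dots> \<le> Ktot * (2 * \<delta>)"
      using i K0 d0 unfolding Ktot_def by (intro mult_right_mono member_le_sum sum_nonneg) auto
    also have "\<dots> \<le> (2 * Ktot + 1) * real M * \<delta>"
    proof -
      have M1: "real M \<ge> 1" using i by simp
      have "Ktot * (2 * \<delta>) \<le> (2 * Ktot + 1) * \<delta>" using d0 Ktot0 by (simp add: algebra_simps)
      also have "\<dots> \<le> (2 * Ktot + 1) * \<delta> * real M"
        using mult_left_mono[OF M1, of "(2 * Ktot + 1) * \<delta>"] d0 Ktot0 by simp
      finally show ?thesis by (simp add: mult_ac)
    qed
    finally show "measure (density lborel f) (laguerre_cell M y g i - laguerre_cell M y g' i)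
             \<le> (2 * Ktot + 1) * real M * sup_norm M (\<lambda>j. g j - g' j)" unfolding \<delta>_def .
  qed
qed

end
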